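(* Let $F:[-1,1]^n\to[-\alpha,\alpha]$ be a multilinear polynomial, with $\alpha>0$, and let $0<\eta\le\frac{1}{\alpha n}$. Let $(x_t)$ be the projected gradient descent sequence $x_{t+1}=\Pi_{[-1,1]^n}(x_t-\eta\nabla F(x_t))$ with $x_0\in[-1,1]^n$. Then for every $t$, $$F(x_{t+1})-F(x_t)\le-\frac{\eta}{2}\|G(x_t)\|_2^2.$$
   Context: $\Pi_{[-1,1]^n}(y)=\arg\min_{x\in[-1,1]^n}\tfrac12\|x-y\|_2^2$ is the Euclidean projection onto the cube. The projected gradient mapping is $G(x)=\frac1\eta\big(x-\Pi_{[-1,1]^n}(x-\eta\nabla F(x))\big)$, so that $x_{t+1}=x_t-\eta G(x_t)$. *)

theory Defs
  imports "HOL-Analysis.Analysis"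
begin

text \<open>The cube [-1,1]^n, with n = CARD('n).\<close>
definition cube :: "(real^'n) set" where
  "cube = {x. \<forall>i. -1 \<le> x $ i \<and> x $ i \<le> 1}"

definition proj_cube :: "real^'n \<Rightarrow> real^'n" where
  "proj_cube y = closest_point cube y"

definition multilinear :: "(real^'n \<Rightarrow> real) \<Rightarrow> bool" where
  "multilinear F \<longleftrightarrow> (\<exists>c :: 'n set \<Rightarrow> real. \<forall>x. F x = (\<Sum>S\<in>UNIV. c S * (\<Prod>i\<in>S. x $ i)))"

definition grad_map :: "real \<Rightarrow> (real^'n \<Rightarrow> real^'n) \<Rightarrow> real^'n \<Rightarrow> real^'n" where
  "grad_map \<eta> gF x = (1 / \<eta>) *\<^sub>R (x - proj_cube (x - \<eta> *\<^sub>R gF x))"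

end

theory Submission
  imports Defs
begin

definition upd :: "real^'n \<Rightarrow> 'n \<Rightarrow> real \<Rightarrow> real^'n" where
  "upd z k t = (\<chi> i. if i = k then t else z $ i)"

lemma upd_nth[simp]: "upd z k t $ i = (if i = k then t else z $ i)"
  by (simp add: upd_def)

lemma upd_upd_same[simp]: "upd (upd z k a) k b = upd z k b"
  by (simp add: vec_eq_iff)

lemma upd_comm: "j \<noteq> k \<Longrightarrow> upd (upd z k a) j b = upd (upd z j b) k a"
  by (simp add: vec_eq_iff)

lemma upd_self[simp]: "upd z k (z $ k) = z"
  by (simp add: vec_eq_iff)

lemma upd_cube: "z \<in> cube \<Longrightarrow> -1 \<le> t \<Longrightarrow> t \<le> 1 \<Longrightarrow> upd z k t \<in> cube"
  by (auto simp: cube_def)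

lemma cube_cbox: "cube = cbox (-1) (1::real^'n)"
  by (auto simp: cube_def mem_box_cart)

lemma cube_closed: "closed cube" and cube_convex: "convex cube"
  by (auto simp: cube_cbox)

lemma cube_ne: "cube \<noteq> {}"
proof -
  have "0 \<in> cube" by (simp add: cube_def)
  then show ?thesis by blast
qed

lemma prod_upd: "(\<Prod>i\<in>S. upd z k t $ i) = (if k \<in> S then t * (\<Prod>i\<in>S-{k}. z $ i) else (\<Prod>i\<in>S. z $ i))"
proof (cases "k \<in> S")
  case True
  have "(\<Prod>i\<in>S. upd z k t $ i) = upd z k t $ k * (\<Prod>i\<in>S-{k}. upd z k t $ i)"
    using True by (simp add: prod.remove)
  also have "(\<Prod>i\<in>S-{k}. upd z k t $ i) = (\<Prod>i\<in>S-{k}. z $ i)"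
    by (rule prod.cong) auto
  finally show ?thesis using True by simp
next
  case False
  then show ?thesis by (auto intro: prod.cong)
qed

lemma aff:
  assumes "multilinear F"
  shows "F (upd z k t) = (1+t)/2 * F (upd z k 1) + (1-t)/2 * F (upd z k (-1))"
proof -
  obtain c where c: "\<And>x. F x = (\<Sum>S\<in>UNIV. c S * (\<Prod>i\<in>S. x $ i))"
    using assms unfolding multilinear_def by blast
  have "\<And>S. c S * (\<Prod>i\<in>S. upd z k t $ i) = (1+t)/2 * (c S * (\<Prod>i\<in>S. upd z k 1 $ i))
      + (1-t)/2 * (c S * (\<Prod>i\<in>S. upd z k (-1) $ i))"
    unfolding prod_upd by (auto simp: algebra_simps add_divide_distrib diff_divide_distrib)
  then show ?thesis unfolding c
    by (simp add: sum.distrib sum_distrib_left)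
qed

lemma four: "\<bar>a\<bar> \<le> \<alpha> \<Longrightarrow> \<bar>b\<bar> \<le> \<alpha> \<Longrightarrow> \<bar>c\<bar> \<le> \<alpha> \<Longrightarrow> \<bar>d\<bar> \<le> \<alpha> \<Longrightarrow>
  \<bar>(a - b)/2 - (c - d)/2\<bar> \<le> 2 * (\<alpha>::real)"
  by (simp add: abs_le_iff field_simps; linarith)

definition D :: "(real^'n \<Rightarrow> real) \<Rightarrow> real^'n \<Rightarrow> 'n \<Rightarrow> real" where
  "D F z k = (F (upd z k 1) - F (upd z k (-1))) / 2"

lemma D_indep: "D F (upd z k t) k = D F z k"
  by (simp add: D_def)

lemma D_aff:
  assumes "multilinear F" "j \<noteq> k"
  shows "D F (upd z j t) k = (1+t)/2 * D F (upd z j 1) k + (1-t)/2 * D F (upd z j (-1)) k"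
  using aff[OF assms(1), of "upd z k 1" j t] aff[OF assms(1), of "upd z k (-1)" j t]
  unfolding D_def using upd_comm[OF assms(2)]
  by (simp add: algebra_simps add_divide_distrib diff_divide_distrib)

lemma D_diff_bound:
  assumes ml: "multilinear F" and bd: "\<And>y. y \<in> cube \<Longrightarrow> \<bar>F y\<bar> \<le> \<alpha>"
    and z: "z \<in> cube" and t: "\<bar>t\<bar> \<le> 1" and t': "\<bar>t'\<bar> \<le> 1"
  shows "\<bar>D F (upd z j t) k - D F (upd z j t') k\<bar> \<le> \<alpha> * \<bar>t - t'\<bar>"
proof (cases "j = k")
  case True
  have "\<alpha> \<ge> 0" using bd[OF z] by simp
  then show ?thesis using True by (simp add: D_indep)
next
  case False
  define P where "P = D F (upd z j 1) k"
  define M where "M = D F (upd z j (-1)) k"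
  have "D F (upd z j t) k - D F (upd z j t') k = (t - t')/2 * (P - M)"
    unfolding P_def M_def D_aff[OF ml False, of z t] D_aff[OF ml False, of z t']
    by (simp add: algebra_simps add_divide_distrib diff_divide_distrib)
  moreover have PM: "\<bar>P - M\<bar> \<le> 2 * \<alpha>"
  proof -
    have c: "\<And>a b. \<bar>a\<bar> \<le> 1 \<Longrightarrow> \<bar>b\<bar> \<le> 1 \<Longrightarrow> upd (upd z j a) k b \<in> cube"
      using z by (auto intro!: upd_cube)
    have "\<bar>F (upd (upd z j a) k b)\<bar> \<le> \<alpha>" if "\<bar>a\<bar> \<le> 1" "\<bar>b\<bar> \<le> 1" for a b
      using bd c that by blast
    from this[of 1 1] this[of 1 "-1"] this[of "-1" 1] this[of "-1" "-1"]
    have "\<bar>F (upd (upd z j 1) k 1)\<bar> \<le> \<alpha>" "\<bar>F (upd (upd z j 1) k (-1))\<bar> \<le> \<alpha>"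
      "\<bar>F (upd (upd z j (-1)) k 1)\<bar> \<le> \<alpha>" "\<bar>F (upd (upd z j (-1)) k (-1))\<bar> \<le> \<alpha>" by auto
    then show ?thesis unfolding P_def M_def D_def by (rule four)
  qed
  ultimately have "\<bar>D F (upd z j t) k - D F (upd z j t') k\<bar> = \<bar>t - t'\<bar> / 2 * \<bar>P - M\<bar>"
    by (simp only: abs_mult abs_divide)
  also have "\<dots> \<le> \<bar>t - t'\<bar> / 2 * (2 * \<alpha>)"
    by (rule mult_left_mono[OF PM]) simp
  finally show ?thesis by (simp add: mult.commute)
qed


lemma lip_gen:
  assumes ml: "multilinear F" and bd: "\<And>y. y \<in> cube \<Longrightarrow> \<bar>F y\<bar> \<le> \<alpha>"
    and A: "finite A"
  shows "\<forall>u v. u \<in> cube \<longrightarrow> v \<in> cube \<longrightarrow> (\<forall>j. j \<notin> A \<longrightarrow> u $ j = v $ j) \<longrightarrow>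
     \<bar>D F u k - D F v k\<bar> \<le> \<alpha> * (\<Sum>j\<in>A. \<bar>u $ j - v $ j\<bar>)"
  using A
proof (induction A rule: finite_induct)
  case empty
  show ?case
  proof (intro allI impI)
    fix u v :: "real^'a"
    assume "\<forall>j. j \<notin> {} \<longrightarrow> u $ j = v $ j"
    then have "u = v" by (simp add: vec_eq_iff)
    then show "\<bar>D F u k - D F v k\<bar> \<le> \<alpha> * (\<Sum>j\<in>{}. \<bar>u $ j - v $ j\<bar>)" by simp
  qed
next
  case (insert a A)
  show ?case
  proof (intro allI impI)
    fix u v :: "real^'a"
    assume u: "u \<in> cube" and v: "v \<in> cube" and uv: "\<forall>j. j \<notin> insert a A \<longrightarrow> u $ j = v $ j"
    define w where "w = upd u a (v $ a)"
    have vc: "-1 \<le> v $ a" "v $ a \<le> 1" "-1 \<le> u $ a" "u $ a \<le> 1" using u v by (auto simp: cube_def)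
    have w: "w \<in> cube" unfolding w_def using u vc by (intro upd_cube) auto
    have wv: "\<forall>j. j \<notin> A \<longrightarrow> w $ j = v $ j" using uv by (auto simp: w_def)
    have IH: "\<bar>D F w k - D F v k\<bar> \<le> \<alpha> * (\<Sum>j\<in>A. \<bar>w $ j - v $ j\<bar>)"
      using insert.IH w v wv by blast
    have s: "(\<Sum>j\<in>A. \<bar>w $ j - v $ j\<bar>) = (\<Sum>j\<in>A. \<bar>u $ j - v $ j\<bar>)"
      using insert.hyps(2) by (intro sum.cong) (auto simp: w_def)
    have uw: "u = upd w a (u $ a)" and ww: "w = upd w a (v $ a)"
      by (auto simp: w_def vec_eq_iff)
    have "\<bar>D F u k - D F w k\<bar> \<le> \<alpha> * \<bar>u $ a - v $ a\<bar>"
      using D_diff_bound[OF ml bd w, of "u $ a" "v $ a" a k] vc uw ww by (auto simp: abs_le_iff)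
    then have "\<bar>D F u k - D F v k\<bar> \<le> \<alpha> * \<bar>u $ a - v $ a\<bar> + \<alpha> * (\<Sum>j\<in>A. \<bar>u $ j - v $ j\<bar>)"
    proof -
      have tri: "\<bar>D F u k - D F v k\<bar> \<le> \<bar>D F u k - D F w k\<bar> + \<bar>D F w k - D F v k\<bar>"
        using abs_triangle_ineq[of "D F u k - D F w k" "D F w k - D F v k"] by simp
      show ?thesis using tri IH[unfolded s] \<open>\<bar>D F u k - D F w k\<bar> \<le> \<alpha> * \<bar>u $ a - v $ a\<bar>\<close> by linarith
    qed
    then show "\<bar>D F u k - D F v k\<bar> \<le> \<alpha> * (\<Sum>j\<in>insert a A. \<bar>u $ j - v $ j\<bar>)"
      using insert.hyps by (simp add: distrib_left)
  qed
qed

lemma lip: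
  assumes ml: "multilinear F" and bd: "\<And>y. y \<in> cube \<Longrightarrow> \<bar>F y\<bar> \<le> \<alpha>"
    and "u \<in> cube" "v \<in> cube"
  shows "\<bar>D F u k - D F v k\<bar> \<le> \<alpha> * (\<Sum>j\<in>UNIV. \<bar>u $ j - v $ j\<bar>)"
  using lip_gen[OF ml bd, of UNIV k] assms by auto

lemma gF_eq:
  assumes ml: "multilinear F" and der: "\<And>y. (F has_derivative (\<lambda>h. gF y \<bullet> h)) (at y)"
  shows "gF z $ k = D F z k"
proof -
  have e: "\<And>t. z + t *\<^sub>R axis k 1 = upd z k (z $ k + t)"
    by (simp add: vec_eq_iff axis_def)
  have d1: "((\<lambda>t::real. z + t *\<^sub>R axis k 1) has_derivative (\<lambda>h. h *\<^sub>R axis k 1)) (at 0)"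
    by (rule has_derivative_eq_rhs, (rule derivative_intros)+, simp)
  have "((F \<circ> (\<lambda>t::real. z + t *\<^sub>R axis k 1)) has_derivative ((\<lambda>h. gF z \<bullet> h) \<circ> (\<lambda>h. h *\<^sub>R axis k 1))) (at 0)"
    by (rule diff_chain_at[OF d1]) (use der[of z] in simp)
  moreover have "((\<lambda>h. gF z \<bullet> h) \<circ> (\<lambda>h. h *\<^sub>R axis k 1)) = (*) (gF z $ k)"
    by (auto simp: inner_axis mult.commute)
  ultimately have A: "((\<lambda>t. F (upd z k (z $ k + t))) has_real_derivative (gF z $ k)) (at 0)"
    unfolding has_field_derivative_def by (simp add: o_def e)
  define P where "P = F (upd z k 1)"
  define M where "M = F (upd z k (-1))"
  define C where "C = (1 + z $ k)/2 * P + (1 - z $ k)/2 * M"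
  have f: "(\<lambda>t. F (upd z k (z $ k + t))) = (\<lambda>t. C + ((P - M)/2) * t)"
  proof
    fix t
    show "F (upd z k (z $ k + t)) = C + ((P - M)/2) * t"
      unfolding P_def M_def C_def aff[OF ml, of z k "z $ k + t"]
      by (simp add: algebra_simps add_divide_distrib diff_divide_distrib)
  qed
  have B: "((\<lambda>t. F (upd z k (z $ k + t))) has_real_derivative ((P - M)/2)) (at 0)"
    unfolding f by (rule DERIV_add[OF DERIV_const DERIV_cmult_Id, simplified])
  show ?thesis using DERIV_unique[OF A B] by (simp add: D_def P_def M_def)
qed

lemma absmul_le: "\<bar>a\<bar> * \<bar>b\<bar> \<le> (a^2 + b^2) / (2::real)"
proof -
  have "0 \<le> (\<bar>a\<bar> - \<bar>b\<bar>)^2" by simp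
  then show ?thesis by (simp add: power2_eq_square algebra_simps)
qed

lemma cs_sum: "(\<Sum>k\<in>UNIV. \<Sum>j\<in>UNIV. \<bar>a $ k\<bar> * \<bar>a $ j\<bar>) \<le> real CARD('n) * (\<Sum>k\<in>UNIV. (a $ k)^2)"
  for a :: "real^'n"
proof -
  have "(\<Sum>k\<in>UNIV. \<Sum>j\<in>UNIV. \<bar>a $ k\<bar> * \<bar>a $ j\<bar>) \<le> (\<Sum>k\<in>UNIV. \<Sum>j\<in>UNIV. ((a $ k)^2 + (a $ j)^2) / 2)"
    by (intro sum_mono absmul_le)
  also have "\<dots> = (\<Sum>k\<in>UNIV. real CARD('n) * (a $ k)^2 / 2 + (\<Sum>j\<in>UNIV. (a $ j)^2) / 2)"
    by (simp add: add_divide_distrib sum.distrib sum_divide_distrib[symmetric])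
  also have "\<dots> = real CARD('n) * (\<Sum>k\<in>UNIV. (a $ k)^2)"
    by (simp add: sum.distrib sum_divide_distrib[symmetric] sum_distrib_left[symmetric])
  finally show ?thesis .
qed


lemma keyK:
  fixes d u v :: "real^'n"
  assumes ml: "multilinear F" and der: "\<And>y. (F has_derivative (\<lambda>h. gF y \<bullet> h)) (at y)"
    and bd: "\<And>y. y \<in> cube \<Longrightarrow> \<bar>F y\<bar> \<le> \<alpha>"
    and u: "u \<in> cube" and v: "v \<in> cube" and uv: "u - v = s *\<^sub>R d" and s: "0 \<le> s"
  shows "(gF u - gF v) \<bullet> d \<le> \<alpha> * s * real CARD('n) * (norm d)^2"
proof -
  have a0: "0 \<le> \<alpha>" using bd[OF u] by simp
  have "(gF u - gF v) \<bullet> d = (\<Sum>k\<in>UNIV. (D F u k - D F v k) * d $ k)"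
    by (simp add: inner_vec_def gF_eq[OF ml der])
  also have "\<dots> \<le> (\<Sum>k\<in>UNIV. \<bar>d $ k\<bar> * (\<alpha> * (\<Sum>j\<in>UNIV. s * \<bar>d $ j\<bar>)))"
  proof (rule sum_mono)
    fix k
    have "(D F u k - D F v k) * d $ k \<le> \<bar>D F u k - D F v k\<bar> * \<bar>d $ k\<bar>"
      by (metis abs_ge_self abs_mult)
    also have "\<dots> \<le> (\<alpha> * (\<Sum>j\<in>UNIV. \<bar>u $ j - v $ j\<bar>)) * \<bar>d $ k\<bar>"
      by (rule mult_right_mono[OF lip[OF ml bd u v]]) auto
    also have "(\<Sum>j\<in>UNIV. \<bar>u $ j - v $ j\<bar>) = (\<Sum>j\<in>UNIV. s * \<bar>d $ j\<bar>)"
    proof (rule sum.cong)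
      fix j
      have "u $ j - v $ j = s * d $ j" using arg_cong[OF uv, of "\<lambda>w. w $ j"] by simp
      then show "\<bar>u $ j - v $ j\<bar> = s * \<bar>d $ j\<bar>" using s by (simp add: abs_mult)
    qed simp
    finally show "(D F u k - D F v k) * d $ k \<le> \<bar>d $ k\<bar> * (\<alpha> * (\<Sum>j\<in>UNIV. s * \<bar>d $ j\<bar>))"
      by (simp add: mult.commute)
  qed
  also have "\<dots> = \<alpha> * s * (\<Sum>k\<in>UNIV. \<Sum>j\<in>UNIV. \<bar>d $ k\<bar> * \<bar>d $ j\<bar>)"
    by (simp add: sum_distrib_left sum_distrib_right mult.assoc mult.left_commute)
  also have "\<dots> \<le> \<alpha> * s * (real CARD('n) * (\<Sum>k\<in>UNIV. (d $ k)^2))"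
    by (rule mult_left_mono[OF cs_sum]) (use a0 s in simp)
  also have "(\<Sum>k\<in>UNIV. (d $ k)^2) = (norm d)^2"
    unfolding power2_norm_eq_inner by (simp add: inner_vec_def power2_eq_square)
  finally show ?thesis by (simp add: mult.assoc)
qed

lemma descent:
  fixes x y :: "real^'n"
  assumes ml: "multilinear F" and der: "\<And>y. (F has_derivative (\<lambda>h. gF y \<bullet> h)) (at y)"
    and bd: "\<And>y. y \<in> cube \<Longrightarrow> \<bar>F y\<bar> \<le> \<alpha>"
    and x: "x \<in> cube" and y: "y \<in> cube"
  shows "F y - F x - gF x \<bullet> (y - x) \<le> \<alpha> * real CARD('n) / 2 * (norm (y - x))^2"
proof -
  define d where "d = y - x"
  define L where "L = \<alpha> * real CARD('n)"
  define N where "N = (norm d)^2"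
  define h where "h = (\<lambda>s. F (x + s *\<^sub>R d) - s * (gF x \<bullet> d) - L * s^2 / 2 * N)"
  have "h 1 \<le> h 0"
  proof (rule DERIV_nonpos_imp_nonincreasing[of 0 1 h])
    fix s :: real assume s0: "0 \<le> s" and s1: "s \<le> 1"
    have d1: "((\<lambda>t::real. x + t *\<^sub>R d) has_derivative (\<lambda>h. h *\<^sub>R d)) (at s)"
      by (rule has_derivative_eq_rhs, (rule derivative_intros)+, simp)
    have "((F \<circ> (\<lambda>t::real. x + t *\<^sub>R d)) has_derivative ((\<lambda>h. gF (x + s *\<^sub>R d) \<bullet> h) \<circ> (\<lambda>h. h *\<^sub>R d))) (at s)"
      by (rule diff_chain_at[OF d1]) (use der[of "x + s *\<^sub>R d"] in simp)
    moreover have "((\<lambda>h. gF (x + s *\<^sub>R d) \<bullet> h) \<circ> (\<lambda>h. h *\<^sub>R d)) = (*) (gF (x + s *\<^sub>R d) \<bullet> d)"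
      by (auto simp: mult.commute)
    ultimately have A: "((\<lambda>t. F (x + t *\<^sub>R d)) has_real_derivative (gF (x + s *\<^sub>R d) \<bullet> d)) (at s)"
      unfolding has_field_derivative_def by (simp add: o_def)
    have B: "((\<lambda>t. t * (gF x \<bullet> d) + L * t^2 / 2 * N) has_real_derivative ((gF x \<bullet> d) + L * s * N)) (at s)"
      by (rule derivative_eq_intros refl | simp)+
    have C: "(h has_real_derivative (gF (x + s *\<^sub>R d) \<bullet> d - ((gF x \<bullet> d) + L * s * N))) (at s)"
      unfolding h_def using DERIV_diff[OF A B] by (simp add: algebra_simps)
    have xs: "x + s *\<^sub>R d \<in> cube"
    proof -
      have "x + s *\<^sub>R d = (1 - s) *\<^sub>R x + s *\<^sub>R y" by (simp add: d_def algebra_simps)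
      then show ?thesis using convexD[OF cube_convex x y, of "1-s" s] s0 s1 by simp
    qed
    have K: "(gF (x + s *\<^sub>R d) - gF x) \<bullet> d \<le> \<alpha> * s * real CARD('n) * (norm d)^2"
      by (rule keyK[OF ml der bd xs x _ s0]) auto
    show "\<exists>y. (h has_real_derivative y) (at s) \<and> y \<le> 0"
      using C K by (intro exI[of _ "gF (x + s *\<^sub>R d) \<bullet> d - ((gF x \<bullet> d) + L * s * N)"])
        (simp add: L_def N_def inner_diff_left mult.commute mult.left_commute)
  qed simp
  then show ?thesis by (simp add: h_def d_def L_def N_def)
qed


theorem lemma9:
  fixes F :: "real^'n \<Rightarrow> real" and gF :: "real^'n \<Rightarrow> real^'n"
    and \<alpha> \<eta> :: real and x :: "nat \<Rightarrow> real^'n"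
  assumes "multilinear F"
    and "\<And>y. (F has_derivative (\<lambda>h. gF y \<bullet> h)) (at y)"
    and "\<alpha> > 0"
    and "\<And>y. y \<in> cube \<Longrightarrow> \<bar>F y\<bar> \<le> \<alpha>"
    and "0 < \<eta>" and "\<eta> \<le> 1 / (\<alpha> * real CARD('n))"
    and "x 0 \<in> cube"
    and "\<And>t. x (Suc t) = proj_cube (x t - \<eta> *\<^sub>R gF (x t))"
  shows "F (x (Suc t)) - F (x t) \<le> - (\<eta> / 2) * (norm (grad_map \<eta> gF (x t)))\<^sup>2"
proof -
  note ml = assms(1) and der = assms(2) and bd = assms(4)
  have cub: "x t \<in> cube" for t
  proof (cases t)
    case 0 then show ?thesis using assms(7) by simp
  next
    case (Suc m) then show ?thesis
      using assms(8)[of m] closest_point_in_set[OF cube_closed cube_ne] by (simp add: proj_cube_def)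
  qed
  define xt where "xt = x t"
  define y where "y = x (Suc t)"
  define g where "g = gF xt"
  define N where "N = (norm (y - xt))^2"
  have xt: "xt \<in> cube" and y: "y \<in> cube" using cub by (auto simp: xt_def y_def)
  have yp: "y = closest_point cube (xt - \<eta> *\<^sub>R g)"
    by (simp add: y_def xt_def g_def assms(8) proj_cube_def)
  have dot: "(xt - \<eta> *\<^sub>R g - y) \<bullet> (xt - y) \<le> 0"
    unfolding yp by (rule closest_point_dot[OF cube_convex cube_closed xt])
  have "(xt - \<eta> *\<^sub>R g - y) \<bullet> (xt - y) = N + \<eta> * (g \<bullet> (y - xt))"
    unfolding N_def power2_norm_eq_inner by (simp add: algebra_simps inner_diff_left inner_diff_right)
  with dot have gd: "\<eta> * (g \<bullet> (y - xt)) \<le> - N" by simp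
  have desc: "F y - F xt - g \<bullet> (y - xt) \<le> \<alpha> * real CARD('n) / 2 * N"
    unfolding g_def N_def by (rule descent[OF ml der bd xt y])
  have Lpos: "0 < \<alpha> * real CARD('n)" using assms(3) by simp
  have L: "\<alpha> * real CARD('n) \<le> 1 / \<eta>"
    using assms(5,6) Lpos by (simp add: field_simps)
  have N0: "0 \<le> N" by (simp add: N_def)
  have "\<alpha> * real CARD('n) / 2 * N \<le> (1 / \<eta>) / 2 * N"
    using L N0 by (intro mult_right_mono divide_right_mono) auto
  moreover have "g \<bullet> (y - xt) \<le> - N / \<eta>"
    using gd assms(5) by (simp add: field_simps)
  ultimately have "F y - F xt \<le> - N / \<eta> + (1 / \<eta>) / 2 * N" using desc by linarith
  also have "\<dots> = - (\<eta> / 2) * (norm (grad_map \<eta> gF xt))\<^sup>2"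
  proof -
    have "grad_map \<eta> gF xt = (1 / \<eta>) *\<^sub>R (xt - y)"
      by (simp add: grad_map_def yp proj_cube_def g_def)
    then have "(norm (grad_map \<eta> gF xt))\<^sup>2 = N / \<eta>^2"
      using assms(5) by (simp add: N_def norm_minus_commute power_divide)
    then show ?thesis using assms(5) by (simp add: field_simps power2_eq_square)
  qed
  finally show ?thesis by (simp add: xt_def y_def)
qed

end
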